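(* Let $\mathcal{X}$ be Polish with a lower semicontinuous metric $d$, let $\alpha,\theta:[0,\infty)\to[0,\infty)$ be convex increasing bijections (so $\alpha(0)=\theta(0)=0$), and let $\mu$ be a Borel probability measure on $\mathcal{X}$ such that $\alpha(\mathcal{T}_{\theta(d)}(\nu,\mu))\le H(\nu|\mu)$ for all Borel probability measures $\nu$. Then for every $x_o\in\mathcal{X}$ there exists $\varepsilon>0$ such that $$\int_{\mathcal{X}}\exp\big(\alpha\circ\theta(\varepsilon\, d(x,x_o))\big)\,d\mu(x)<+\infty.$$
   Context: $\mathcal{T}_{\theta(d)}(\nu,\mu)=\inf_\pi\int\theta(d(x,y))\,d\pi(x,y)$ over couplings $\pi$ of $\nu$ and $\mu$. $H(\nu|\mu)=\int\log\frac{d\nu}{d\mu}d\nu$ if $\nu\ll\mu$, $+\infty$ otherwise. *)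

theory Defs
  imports "HOL-Probability.Probability"
begin

definition is_metric :: "('a \<Rightarrow> 'a \<Rightarrow> real) \<Rightarrow> bool" where
  "is_metric d \<longleftrightarrow>
     (\<forall>x y. d x y = 0 \<longleftrightarrow> x = y) \<and>
     (\<forall>x y. d x y = d y x) \<and>
     (\<forall>x y z. d x z \<le> d x y + d y z)"

definition lsc :: "('b::topological_space \<Rightarrow> real) \<Rightarrow> bool" where
  "lsc f \<longleftrightarrow> (\<forall>t. open {z. t < f z})"

definition borel_prob :: "'b::topological_space measure \<Rightarrow> bool" where
  "borel_prob \<nu> \<longleftrightarrow> prob_space \<nu> \<and> sets \<nu> = sets borel"

definition couplings :: "'a::topological_space measure \<Rightarrow> 'a measure \<Rightarrow> ('a \<times> 'a) measure set" where
  "couplings \<nu> \<mu> = {\<pi>. borel_prob \<pi> \<and> distr \<pi> borel fst = \<nu> \<and> distr \<pi> borel snd = \<mu>}"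

definition transport_cost ::
  "('a \<Rightarrow> 'a \<Rightarrow> real) \<Rightarrow> 'a::topological_space measure \<Rightarrow> 'a measure \<Rightarrow> ennreal" where
  "transport_cost c \<nu> \<mu> = (INF \<pi>\<in>couplings \<nu> \<mu>. \<integral>\<^sup>+ z. ennreal (c (fst z) (snd z)) \<partial>\<pi>)"

text \<open>The integral is taken as (positive part) - (negative part); the negative part
  is always finite for probability measures.\<close>
definition rel_entropy :: "'a measure \<Rightarrow> 'a measure \<Rightarrow> ereal" where
  "rel_entropy \<nu> \<mu> =
     (if absolutely_continuous \<mu> \<nu> then
        enn2ereal (\<integral>\<^sup>+ x. ennreal (max 0 (ln (enn2real (RN_deriv \<mu> \<nu> x)))) \<partial>\<nu>)
        - enn2ereal (\<integral>\<^sup>+ x. ennreal (max 0 (- ln (enn2real (RN_deriv \<mu> \<nu> x)))) \<partial>\<nu>)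
      else \<infinity>)"

definition ext_fun :: "(real \<Rightarrow> real) \<Rightarrow> ennreal \<Rightarrow> ereal" where
  "ext_fun \<alpha> t = (if t = \<top> then \<infinity> else ereal (\<alpha> (enn2real t)))"

end

theory Submission
  imports Defs
begin

lemma zero_fix:
  fixes f :: "real \<Rightarrow> real"
  assumes "strict_mono_on {0..} f" "bij_betw f {0..} {0..}"
  shows "f 0 = 0"
proof -
  have "0 \<in> f ` {0..}" using assms(2) by (simp add: bij_betw_def)
  then obtain x where x: "x \<ge> 0" "f x = 0" by auto
  have f0: "f 0 \<ge> 0" using assms(2) by (auto simp: bij_betw_def)
  show ?thesis
  proof (cases "x = 0")
    case True then show ?thesis using x by simp
  next
    case False
    then have "f 0 < f x" using assms(1) x by (intro strict_mono_onD[OF assms(1)]) auto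
    then show ?thesis using x f0 by simp
  qed
qed

lemma nonneg_val:
  fixes f :: "real \<Rightarrow> real"
  assumes "bij_betw f {0..} {0..}" "t \<ge> 0"
  shows "f t \<ge> 0"
  using assms by (auto simp: bij_betw_def)

lemma convex_scale:
  fixes f :: "real \<Rightarrow> real"
  assumes "convex_on {0..} f" "f 0 = 0" "0 \<le> t" "0 \<le> c" "c \<le> 1"
  shows "f (c * t) \<le> c * f t"
proof -
  have "f ((1 - c) *\<^sub>R 0 + c *\<^sub>R t) \<le> (1 - c) * f 0 + c * f t"
    by (rule convex_onD[OF assms(1)]) (use assms in auto)
  then show ?thesis using assms by simp
qed

lemma convex_expand:
  fixes f :: "real \<Rightarrow> real"
  assumes "convex_on {0..} f" "f 0 = 0" "0 \<le> t" "1 \<le> c"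
  shows "c * f t \<le> f (c * t)"
proof -
  have "f ((1/c) * (c * t)) \<le> (1/c) * f (c*t)"
    by (rule convex_scale[OF assms(1,2)]) (use assms in auto)
  then have "f t \<le> (1/c) * f (c*t)" using assms by simp
  then show ?thesis using assms by (simp add: field_simps)
qed


lemma d_nonneg: "is_metric d \<Longrightarrow> 0 \<le> d x y"
proof -
  assume "is_metric d"
  then have "d x x \<le> d x y + d y x" "d x x = 0" "d x y = d y x" unfolding is_metric_def by blast+
  then show ?thesis by linarith
qed

lemma meas_dxo:
  fixes d :: "'a::polish_space \<Rightarrow> 'a \<Rightarrow> real"
  assumes d_lsc: "lsc (\<lambda>z::'a \<times> 'a. d (fst z) (snd z))"
  shows "(\<lambda>x. d x xo) \<in> borel_measurable borel"
proof -
  have m: "(\<lambda>z::'a \<times> 'a. d (fst z) (snd z)) \<in> borel_measurable borel"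
    unfolding borel_measurable_iff_greater using d_lsc unfolding lsc_def by auto
  have "(\<lambda>x::'a. (x, xo)) \<in> borel_measurable borel"
    by (intro borel_measurable_continuous_onI continuous_intros)
  from measurable_compose[OF this m] show ?thesis by simp
qed

lemma key_tail:
  fixes d :: "'a::polish_space \<Rightarrow> 'a \<Rightarrow> real"
    and \<alpha> \<theta> :: "real \<Rightarrow> real"
    and \<mu> :: "'a measure"
  assumes d_metric: "is_metric d"
    and d_lsc: "lsc (\<lambda>z::'a \<times> 'a. d (fst z) (snd z))"
    and \<alpha>_mono: "strict_mono_on {0..} \<alpha>"
    and \<theta>_mono: "strict_mono_on {0..} \<theta>"
    and \<theta>_bij: "bij_betw \<theta> {0..} {0..}"
    and \<mu>_prob: "borel_prob \<mu>"
    and TCI: "\<And>\<nu>. borel_prob \<nu> \<Longrightarrow>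
               ext_fun \<alpha> (transport_cost (\<lambda>x y. \<theta> (d x y)) \<nu> \<mu>) \<le> rel_entropy \<nu> \<mu>"
    and R: "0 \<le> R" and qpos: "0 < measure \<mu> {x. R \<le> d x xo}"
  shows "\<alpha> (\<theta> (R/2) * (1 - measure \<mu> {x. R/2 \<le> d x xo})) \<le> ln (1 / measure \<mu> {x. R \<le> d x xo})"
proof -
  define D where "D x = d x xo" for x
  define B where "B = {x. R \<le> D x}"
  define C where "C = {x. D x < R/2}"
  define q where "q = measure \<mu> B"
  define q2 where "q2 = measure \<mu> {x. R/2 \<le> D x}"
  have P: "prob_space \<mu>" and sets\<mu>: "sets \<mu> = sets borel" using \<mu>_prob by (auto simp: borel_prob_def)
  interpret P: prob_space \<mu> by (fact P)
  have space\<mu>: "space \<mu> = UNIV" using sets_eq_imp_space_eq[OF sets\<mu>] by simp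
  have mc: "measurable \<mu> (borel::real measure) = measurable borel borel" by (rule measurable_cong_sets[OF sets\<mu> refl])
  have Dm: "D \<in> borel_measurable \<mu>"
    using meas_dxo[OF d_lsc, of xo] mc unfolding D_def by simp
  have Dmb: "D \<in> borel_measurable borel"
    using meas_dxo[OF d_lsc, of xo] unfolding D_def by simp
  have Bs: "B \<in> sets \<mu>"
  proof -
    have "{x \<in> space \<mu>. R \<le> D x} \<in> sets \<mu>" using Dm by measurable
    then show ?thesis unfolding B_def space\<mu> by simp
  qed
  have Cs: "- C \<in> sets \<mu>"
  proof -
    have "{x \<in> space \<mu>. R/2 \<le> D x} \<in> sets \<mu>" using Dm by measurable
    moreover have "- C = {x \<in> space \<mu>. R/2 \<le> D x}" unfolding C_def space\<mu> by auto
    ultimately show ?thesis by simp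
  qed
  have q2C: "q2 = measure \<mu> (- C)" unfolding q2_def C_def by (rule arg_cong[where f="measure \<mu>"]) auto
  have qpos': "0 < q" using qpos unfolding q_def B_def D_def by simp
  have eB: "emeasure \<mu> B = ennreal q" unfolding q_def by (simp add: P.emeasure_eq_measure)
  define \<nu> where "\<nu> = uniform_measure \<mu> B"
  have \<nu>P: "prob_space \<nu>" unfolding \<nu>_def
    by (rule prob_space_uniform_measure) (use eB qpos' in auto)
  have sets\<nu>: "sets \<nu> = sets borel" unfolding \<nu>_def uniform_measure_def using sets\<mu> by simp
  have bp\<nu>: "borel_prob \<nu>" using \<nu>P sets\<nu> by (simp add: borel_prob_def)
  define f where "f x = indicator B x / emeasure \<mu> B" for x
  have fm: "f \<in> borel_measurable \<mu>" unfolding f_def using Bs by measurable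
  have \<nu>dens: "\<nu> = density \<mu> f" unfolding \<nu>_def uniform_measure_def f_def by simp
  have ac: "absolutely_continuous \<mu> \<nu>" unfolding \<nu>dens by (rule absolutely_continuousI_density[OF fm])
  have AERN: "AE x in \<mu>. f x = RN_deriv \<mu> \<nu> x"
    by (rule sigma_finite_measure.RN_deriv_unique[OF prob_space_imp_sigma_finite[OF P] fm \<nu>dens[symmetric]])
  have AEnu: "AE x in \<nu>. RN_deriv \<mu> \<nu> x = ennreal (1/q)"
  proof -
    have "AE x in \<mu>. 0 < f x \<longrightarrow> RN_deriv \<mu> \<nu> x = ennreal (1/q)"
      using AERN
    proof eventually_elim
      case (elim x)
      show ?case
      proof
        assume "0 < f x"
        then have "x \<in> B" unfolding f_def by (cases "x \<in> B") auto
        then have "f x = ennreal (1/q)" unfolding f_def eB using qpos'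
          by (simp add: divide_ennreal[symmetric])
        then show "RN_deriv \<mu> \<nu> x = ennreal (1/q)" using elim by simp
      qed
    qed
    then show ?thesis unfolding \<nu>dens by (subst AE_density[OF fm])
  qed
  have q1: "q \<le> 1" unfolding q_def by simp
  have lnpos: "0 \<le> ln (1/q)" using qpos' q1 by simp
  have I1: "(\<integral>\<^sup>+ x. ennreal (max 0 (ln (enn2real (RN_deriv \<mu> \<nu> x)))) \<partial>\<nu>) = ennreal (ln (1/q))"
  proof -
    have "(\<integral>\<^sup>+ x. ennreal (max 0 (ln (enn2real (RN_deriv \<mu> \<nu> x)))) \<partial>\<nu>) = (\<integral>\<^sup>+ x. ennreal (ln (1/q)) \<partial>\<nu>)"
      by (rule nn_integral_cong_AE) (use AEnu lnpos qpos' in \<open>auto elim!: eventually_mono\<close>)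
    also have "\<dots> = ennreal (ln (1/q))" using prob_space.emeasure_space_1[OF \<nu>P] by simp
    finally show ?thesis .
  qed
  have ent: "rel_entropy \<nu> \<mu> \<le> ereal (ln (1/q))"
  proof -
    have gen: "ereal l - enn2ereal X \<le> ereal l" for l X
    proof -
      have "0 \<le> enn2ereal X" by simp
      then show ?thesis by (cases "enn2ereal X") auto
    qed
    show ?thesis
      unfolding rel_entropy_def using ac I1 lnpos by (simp add: enn2ereal_ennreal gen)
  qed
  have \<theta>0: "\<theta> 0 = 0" by (rule zero_fix[OF \<theta>_mono \<theta>_bij])
  have \<theta>R: "0 \<le> \<theta> (R/2)" using nonneg_val[OF \<theta>_bij] R by simp
  have q2le: "q2 \<le> 1" unfolding q2_def by simp
  define L where "L = \<theta> (R/2) * (1 - q2)"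
  have L0: "0 \<le> L" unfolding L_def using \<theta>R q2le by simp
  have Tlow: "ennreal L \<le> transport_cost (\<lambda>x y. \<theta> (d x y)) \<nu> \<mu>"
    unfolding transport_cost_def
  proof (rule INF_greatest)
    fix \<pi> assume "\<pi> \<in> couplings \<nu> \<mu>"
    then have \<pi>p: "prob_space \<pi>" and sets\<pi>: "sets \<pi> = sets borel"
      and m1: "distr \<pi> borel fst = \<nu>" and m2: "distr \<pi> borel snd = \<mu>"
      by (auto simp: couplings_def borel_prob_def)
    interpret Q: prob_space \<pi> by (fact \<pi>p)
    have space\<pi>: "space \<pi> = UNIV" using sets_eq_imp_space_eq[OF sets\<pi>] by simp
    have mc2: "measurable \<pi> (borel::'a measure) = measurable borel borel" by (rule measurable_cong_sets[OF sets\<pi> refl])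
    have fstm: "fst \<in> measurable \<pi> borel" unfolding mc2
      by (intro borel_measurable_continuous_onI continuous_intros)
    have sndm: "snd \<in> measurable \<pi> borel" unfolding mc2
      by (intro borel_measurable_continuous_onI continuous_intros)
    have Bsb: "- B \<in> sets borel" using Bs sets\<mu> by auto
    have Csb: "- C \<in> sets borel" using Cs sets\<mu> by auto
    define S where "S = {z. fst z \<in> B \<and> snd z \<in> C}"
    have E1: "fst -` (- B) \<in> sets \<pi>" using measurable_sets[OF fstm Bsb] space\<pi> by simp
    have E2: "snd -` (- C) \<in> sets \<pi>" using measurable_sets[OF sndm Csb] space\<pi> by simp
    have Ss: "S \<in> sets \<pi>"
    proof -
      have "S = space \<pi> - (fst -` (- B) \<union> snd -` (- C))" unfolding S_def space\<pi> by auto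
      then show ?thesis using E1 E2 by auto
    qed
    have m1B: "measure \<pi> (fst -` (- B)) = 0"
    proof -
      have "measure \<pi> (fst -` (- B)) = measure \<nu> (- B)"
        using measure_distr[OF fstm Bsb] m1 space\<pi> by simp
      also have "\<dots> = 0"
      proof -
        have "emeasure \<nu> (- B) = 0" unfolding \<nu>_def
          using Bs Bsb sets\<mu> by (subst emeasure_uniform_measure) auto
        then show ?thesis by (simp add: measure_def)
      qed
      finally show ?thesis .
    qed
    have m2C: "measure \<pi> (snd -` (- C)) = q2"
      using measure_distr[OF sndm Csb] m2 space\<pi> q2C by simp
    have mS: "1 - q2 \<le> measure \<pi> S"
    proof -
      have "measure \<pi> (- S) \<le> measure \<pi> (fst -` (- B) \<union> snd -` (- C))"
        by (rule Q.finite_measure_mono) (use E1 E2 in \<open>auto simp: S_def\<close>)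
      also have "\<dots> \<le> measure \<pi> (fst -` (- B)) + measure \<pi> (snd -` (- C))"
        by (rule measure_Un_le[OF E1 E2])
      finally have "measure \<pi> (- S) \<le> q2" using m1B m2C by simp
      moreover have "measure \<pi> (- S) = 1 - measure \<pi> S"
        using Q.prob_compl[OF Ss] space\<pi> by (simp add: Compl_eq_Diff_UNIV)
      ultimately show ?thesis by simp
    qed
    have pw: "ennreal (\<theta> (R/2)) * indicator S z \<le> ennreal (\<theta> (d (fst z) (snd z)))" for z
    proof (cases "z \<in> S")
      case True
      then have "R \<le> D (fst z)" "D (snd z) < R/2" unfolding S_def B_def C_def by auto
      moreover have "d (fst z) xo \<le> d (fst z) (snd z) + d (snd z) xo"
        using d_metric unfolding is_metric_def by blast
      ultimately have "R/2 \<le> d (fst z) (snd z)" unfolding D_def by linarith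
      then have "\<theta> (R/2) \<le> \<theta> (d (fst z) (snd z))"
        using R by (intro strict_mono_on_leD[OF \<theta>_mono]) auto
      then show ?thesis using True by (simp add: ennreal_leI)
    qed simp
    have "ennreal L \<le> ennreal (\<theta> (R/2)) * ennreal (measure \<pi> S)"
      unfolding L_def using mS \<theta>R by (simp add: ennreal_mult'[symmetric] ennreal_leI mult_left_mono)
    also have "\<dots> = (\<integral>\<^sup>+ z. ennreal (\<theta> (R/2)) * indicator S z \<partial>\<pi>)"
      using Ss by (simp add: Q.emeasure_eq_measure nn_integral_cmult_indicator)
    also have "\<dots> \<le> (\<integral>\<^sup>+ z. ennreal (\<theta> (d (fst z) (snd z))) \<partial>\<pi>)"
      by (rule nn_integral_mono) (rule pw)
    finally show "ennreal L \<le> (\<integral>\<^sup>+ z. ennreal (\<theta> (d (fst z) (snd z))) \<partial>\<pi>)" .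
  qed
  define T where "T = transport_cost (\<lambda>x y. \<theta> (d x y)) \<nu> \<mu>"
  have ext: "ext_fun \<alpha> T \<le> ereal (ln (1/q))"
    using TCI[OF bp\<nu>] ent unfolding T_def by (rule order_trans)
  have Tfin: "T \<noteq> \<top>"
  proof
    assume "T = \<top>"
    then show False using ext by (simp add: ext_fun_def)
  qed
  have a1: "\<alpha> (enn2real T) \<le> ln (1/q)" using ext Tfin by (simp add: ext_fun_def)
  have "L \<le> enn2real T"
    using enn2real_mono[OF Tlow[folded T_def]] Tfin L0 by (simp add: top.not_eq_extremum)
  then have "\<alpha> L \<le> \<alpha> (enn2real T)" using L0 by (intro strict_mono_on_leD[OF \<alpha>_mono]) auto
  with a1 show ?thesis unfolding L_def q2_def q_def B_def D_def by simp
qed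

theorem mainTheorem8:
  fixes d :: "'a::polish_space \<Rightarrow> 'a \<Rightarrow> real"
    and \<alpha> \<theta> :: "real \<Rightarrow> real"
    and \<mu> :: "'a measure"
  assumes d_metric: "is_metric d"
    and d_lsc: "lsc (\<lambda>z::'a \<times> 'a. d (fst z) (snd z))"
    and \<alpha>_convex: "convex_on {0..} \<alpha>" and \<alpha>_mono: "strict_mono_on {0..} \<alpha>"
    and \<alpha>_bij: "bij_betw \<alpha> {0..} {0..}"
    and \<theta>_convex: "convex_on {0..} \<theta>" and \<theta>_mono: "strict_mono_on {0..} \<theta>"
    and \<theta>_bij: "bij_betw \<theta> {0..} {0..}"
    and \<mu>_prob: "borel_prob \<mu>"
    and TCI: "\<And>\<nu>. borel_prob \<nu> \<Longrightarrow>
               ext_fun \<alpha> (transport_cost (\<lambda>x y. \<theta> (d x y)) \<nu> \<mu>) \<le> rel_entropy \<nu> \<mu>"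
  shows "\<forall>xo. \<exists>\<epsilon>>0. (\<integral>\<^sup>+ x. ennreal (exp (\<alpha> (\<theta> (\<epsilon> * d x xo)))) \<partial>\<mu>) < \<infinity>"
proof
  fix xo
  define D where "D x = d x xo" for x
  define q where "q R = measure \<mu> {x. R \<le> D x}" for R
  define g where "g t = \<alpha> (\<theta> t)" for t
  have P: "prob_space \<mu>" and sets\<mu>: "sets \<mu> = sets borel" using \<mu>_prob by (auto simp: borel_prob_def)
  interpret P: prob_space \<mu> by (fact P)
  have space\<mu>: "space \<mu> = UNIV" using sets_eq_imp_space_eq[OF sets\<mu>] by simp
  have mc: "measurable \<mu> (borel::real measure) = measurable borel borel" by (rule measurable_cong_sets[OF sets\<mu> refl])
  have Dm: "D \<in> borel_measurable \<mu>"
    using meas_dxo[OF d_lsc, of xo] mc unfolding D_def by simp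
  have D0: "0 \<le> D x" for x unfolding D_def by (rule d_nonneg[OF d_metric])
  have sets_ge: "{x. R \<le> D x} \<in> sets \<mu>" for R
  proof -
    have "{x \<in> space \<mu>. R \<le> D x} \<in> sets \<mu>" using Dm by measurable
    then show ?thesis unfolding space\<mu> by simp
  qed
  have qmono: "R1 \<le> R2 \<Longrightarrow> q R2 \<le> q R1" for R1 R2
    unfolding q_def by (rule P.finite_measure_mono) (use sets_ge in auto)
  have \<alpha>0: "\<alpha> 0 = 0" by (rule zero_fix[OF \<alpha>_mono \<alpha>_bij])
  have \<theta>0: "\<theta> 0 = 0" by (rule zero_fix[OF \<theta>_mono \<theta>_bij])
  have \<theta>nn: "0 \<le> t \<Longrightarrow> 0 \<le> \<theta> t" for t using nonneg_val[OF \<theta>_bij] by simp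
  have gnn: "0 \<le> t \<Longrightarrow> 0 \<le> g t" for t unfolding g_def using nonneg_val[OF \<alpha>_bij] \<theta>nn by simp
  have gmono: "0 \<le> s \<Longrightarrow> s \<le> t \<Longrightarrow> g s \<le> g t" for s t
    unfolding g_def using \<theta>nn
    by (intro strict_mono_on_leD[OF \<alpha>_mono] strict_mono_on_leD[OF \<theta>_mono]) auto
  have gexp: "0 \<le> t \<Longrightarrow> 1 \<le> c \<Longrightarrow> c * g t \<le> g (c * t)" for c t
  proof -
    assume t: "0 \<le> t" and c: "1 \<le> c"
    have "c * g t \<le> \<alpha> (c * \<theta> t)" unfolding g_def
      by (rule convex_expand[OF \<alpha>_convex \<alpha>0]) (use t c \<theta>nn in auto)
    also have "\<dots> \<le> g (c * t)" unfolding g_def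
      using convex_expand[OF \<theta>_convex \<theta>0 t c] t c \<theta>nn
      by (intro strict_mono_on_leD[OF \<alpha>_mono]) auto
    finally show ?thesis .
  qed
  have g1: "0 < g 1"
  proof -
    have "\<theta> 0 < \<theta> 1" by (rule strict_mono_onD[OF \<theta>_mono]) auto
    then have "\<alpha> 0 < \<alpha> (\<theta> 1)" using \<theta>0 by (intro strict_mono_onD[OF \<alpha>_mono]) auto
    then show ?thesis unfolding g_def using \<alpha>0 by simp
  qed
  obtain n :: nat where qn: "q n \<le> 1/2"
  proof -
    define A where "A i = {x. real i \<le> D x}" for i :: nat
    have "(\<lambda>i. measure \<mu> (A i)) \<longlonglongrightarrow> measure \<mu> (\<Inter> (range A))"
      by (rule P.finite_Lim_measure_decseq) (use sets_ge in \<open>auto simp: A_def monotone_on_def\<close>)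
    moreover have "\<Inter> (range A) = {}"
    proof -
      have "x \<notin> A (nat (ceiling (D x + 1)))" for x
        using real_nat_ceiling_ge[of "D x + 1"] unfolding A_def by auto
      then show ?thesis by auto
    qed
    ultimately have "(\<lambda>i. measure \<mu> (A i)) \<longlonglongrightarrow> 0" by simp
    then have "eventually (\<lambda>i. measure \<mu> (A i) < 1/2) sequentially"
      by (rule order_tendstoD) simp
    then obtain i where "measure \<mu> (A i) < 1/2" by (auto simp: eventually_sequentially)
    then show ?thesis using that[of i] unfolding A_def q_def by simp
  qed
  have tail: "q R \<le> exp (- g (R/4))" if R: "2 * real n \<le> R" for R
  proof (cases "q R = 0")
    case True then show ?thesis by simp
  next
    case False
    then have qpos: "0 < q R" unfolding q_def by (simp add: zero_less_measure_iff)
    have R0: "0 \<le> R" using R by simp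
    have kt: "\<alpha> (\<theta> (R/2) * (1 - measure \<mu> {x. R/2 \<le> d x xo})) \<le> ln (1 / measure \<mu> {x. R \<le> d x xo})"
      by (rule key_tail[OF d_metric d_lsc \<alpha>_mono \<theta>_mono \<theta>_bij \<mu>_prob TCI R0])
         (use qpos in \<open>simp_all add: q_def D_def\<close>)
    have q2: "q (R/2) \<le> 1/2" using qmono[of n "R/2"] R qn by simp
    have "\<theta> (R/4) \<le> 1/2 * \<theta> (R/2)"
      using convex_scale[OF \<theta>_convex \<theta>0, of "R/2" "1/2"] R0 by simp
    also have "\<dots> \<le> \<theta> (R/2) * (1 - q (R/2))"
    proof -
      have "1/2 \<le> 1 - q (R/2)" using q2 by simp
      from mult_left_mono[OF this \<theta>nn[of "R/2"]] R0 show ?thesis by (simp add: mult.commute)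
    qed
    finally have "g (R/4) \<le> \<alpha> (\<theta> (R/2) * (1 - q (R/2)))" unfolding g_def
      using \<theta>nn[of "R/4"] R0 by (intro strict_mono_on_leD[OF \<alpha>_mono]) auto
    also have "\<dots> \<le> ln (1 / q R)" using kt unfolding q_def D_def by simp
    also have "\<dots> = - ln (q R)" using qpos by (simp add: ln_div)
    finally have "ln (q R) \<le> - g (R/4)" by simp
    then have "exp (ln (q R)) \<le> exp (- g (R/4))" by simp
    then show ?thesis using qpos by simp
  qed
  define K :: nat where "K = max (2 * n) 16"
  define r where "r = exp (- g 1 / 8)"
  define a where "a k = exp (g ((real k + 1) / 16))" for k :: nat
  define A where "A k = {x. nat (floor (D x)) = k}" for k :: nat
  define M where "M = a K / r ^ K"
  have r0: "0 < r" and r1: "r < 1" unfolding r_def using g1 by auto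
  have A_sets: "A k \<in> sets \<mu>" for k
  proof -
    have "{x \<in> space \<mu>. nat (floor (D x)) = k} \<in> sets \<mu>" using Dm by measurable
    then show ?thesis unfolding A_def space\<mu> by simp
  qed
  have fl: "real (nat (floor (D x))) = of_int (floor (D x))" for x using D0[of x] by simp
  have fl1: "real (nat (floor (D x))) \<le> D x" for x using fl[of x] by simp
  have fl2: "D x < real (nat (floor (D x))) + 1" for x using fl[of x] by linarith
  have amono: "k \<le> l \<Longrightarrow> a k \<le> a l" for k l
    unfolding a_def by (simp add: gmono)
  have a1: "1 \<le> a k" for k unfolding a_def using gnn[of "(real k + 1)/16"] by simp
  have M1: "1 \<le> M"
  proof -
    have "r ^ K \<le> 1" using r0 r1 by (simp add: power_le_one)
    then have "r ^ K \<le> a K" using a1[of K] by linarith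
    then show ?thesis unfolding M_def using r0 by simp
  qed
  have term_bd: "a k * measure \<mu> (A k) \<le> M * r ^ k" for k
  proof (cases "k < K")
    case True
    have "a k * measure \<mu> (A k) \<le> a K * 1"
      using amono[of k K] True a1[of k] by (intro mult_mono) auto
    also have "\<dots> \<le> M * r ^ k"
    proof -
      have "r ^ K \<le> r ^ k" using True r0 r1 by (intro power_decreasing) auto
      then have "a K * r ^ K \<le> a K * r ^ k" using a1[of K] by (intro mult_left_mono) auto
      then show ?thesis unfolding M_def using r0 by (simp add: field_simps)
    qed
    finally show ?thesis .
  next
    case False
    then have kK: "K \<le> k" by simp
    have k16: "16 \<le> real k" and kn: "2 * real n \<le> real k" using kK unfolding K_def by auto
    have mA: "measure \<mu> (A k) \<le> q k"
      unfolding q_def by (rule P.finite_measure_mono) (use sets_ge fl1 in \<open>auto simp: A_def\<close>)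
    have "q k \<le> exp (- g (real k / 4))" using tail[OF kn] .
    also have "\<dots> \<le> exp (- 2 * g (real k / 8))"
      using gexp[of "real k / 8" 2] k16 by simp
    finally have mA': "measure \<mu> (A k) \<le> exp (- 2 * g (real k / 8))" using mA by linarith
    have ak: "a k \<le> exp (g (real k / 8))" unfolding a_def using k16 by (simp add: gmono)
    have "a k * measure \<mu> (A k) \<le> exp (g (real k / 8)) * exp (- 2 * g (real k / 8))"
      using ak mA' by (intro mult_mono) auto
    also have "\<dots> = exp (- g (real k / 8))" by (simp flip: exp_add)
    also have "\<dots> \<le> exp (- (real k / 8 * g 1))"
      using gexp[of 1 "real k / 8"] k16 by simp
    also have "\<dots> = r ^ k" unfolding r_def by (simp flip: exp_of_nat_mult)
    also have "\<dots> \<le> M * r ^ k" using M1 r0 by simp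
    finally show ?thesis .
  qed
  have pw: "ennreal (exp (\<alpha> (\<theta> (1/16 * d x xo)))) \<le> (\<Sum>k. ennreal (a k) * indicator (A k) x)" for x
  proof -
    define k0 where "k0 = nat (floor (D x))"
    have "(\<lambda>k. ennreal (a k) * indicator (A k) x) = (\<lambda>k. if k = k0 then ennreal (a k) else 0)"
      by (auto simp: A_def k0_def)
    then have "(\<Sum>k. ennreal (a k) * indicator (A k) x) = ennreal (a k0)"
      using sums_unique[OF sums_single[of k0 "\<lambda>k. ennreal (a k)"]] by simp
    moreover have "exp (\<alpha> (\<theta> (1/16 * d x xo))) \<le> a k0"
      unfolding a_def k0_def using fl2[of x] D0[of x]
      by (simp add: g_def[symmetric] D_def[symmetric] gmono)
    ultimately show ?thesis by (simp add: ennreal_leI)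
  qed
  have "(\<integral>\<^sup>+ x. ennreal (exp (\<alpha> (\<theta> (1/16 * d x xo)))) \<partial>\<mu>)
        \<le> (\<integral>\<^sup>+ x. (\<Sum>k. ennreal (a k) * indicator (A k) x) \<partial>\<mu>)"
    by (rule nn_integral_mono) (rule pw)
  also have "\<dots> = (\<Sum>k. \<integral>\<^sup>+ x. ennreal (a k) * indicator (A k) x \<partial>\<mu>)"
    by (rule nn_integral_suminf) (use A_sets in measurable)
  also have "\<dots> = (\<Sum>k. ennreal (a k * measure \<mu> (A k)))"
  proof -
    have a0: "0 \<le> a k" for k unfolding a_def by simp
    show ?thesis using A_sets a0
      by (simp add: nn_integral_cmult_indicator P.emeasure_eq_measure ennreal_mult)
  qed
  also have "\<dots> \<le> (\<Sum>k. ennreal (M * r ^ k))"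
    by (rule suminf_le) (use term_bd in \<open>auto intro: ennreal_leI\<close>)
  also have "\<dots> < \<infinity>"
  proof -
    have "summable (\<lambda>k. M * r ^ k)" using r0 r1 by (intro summable_mult summable_geometric) auto
    then have "(\<Sum>k. ennreal (M * r ^ k)) \<noteq> \<top>"
      by (rule ennreal_suminf_neq_top) (use M1 r0 in auto)
    then show ?thesis by (simp add: top.not_eq_extremum)
  qed
  finally show "\<exists>\<epsilon>>0. (\<integral>\<^sup>+ x. ennreal (exp (\<alpha> (\<theta> (\<epsilon> * d x xo)))) \<partial>\<mu>) < \<infinity>"
    by (intro exI[of _ "1/16"]) simp
qed

end
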